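(* Let $(x_i,r_i)_{i\in\mathcal{I}}$ be a homogeneous ubiquitous system in a nonempty open set $U\subseteq\mathbb{R}^d$. Then for every real $c>0$, the family $(x_i,c\,r_i)_{i\in\mathcal{I}}$ is also a homogeneous ubiquitous system in $U$.
   Context: Fix a norm $|\cdot|$ on $\mathbb{R}^d$; $\mathcal{L}^d$ is Lebesgue measure. Let $\mathcal{I}$ be a countably infinite index set. A family $(x_i,r_i)_{i\in\mathcal{I}}$ in $\mathbb{R}^d\times(0,\infty)$ is an approximation system if $\sup_i r_i<\infty$ and for every $m\in\mathbb{N}$ the set $\{i\in\mathcal{I}: |x_i|<m,\ r_i>1/m\}$ is finite. It is a homogeneous ubiquitous system in a nonempty open set $U$ if it is an approximation system and for $\mathcal{L}^d$-almost every $x\in U$ there are infinitely many $i\in\mathcal{I}$ with $|x-x_i|<r_i$. *)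

theory Defs
  imports "HOL-Analysis.Analysis"
begin

definition is_norm :: "('a::euclidean_space \<Rightarrow> real) \<Rightarrow> bool" where
  "is_norm N \<longleftrightarrow> (\<forall>x. N x \<ge> 0) \<and> (\<forall>x. N x = 0 \<longleftrightarrow> x = 0)
     \<and> (\<forall>c x. N (c *\<^sub>R x) = \<bar>c\<bar> * N x) \<and> (\<forall>x y. N (x + y) \<le> N x + N y)"

definition approximation_system ::
  "('a::euclidean_space \<Rightarrow> real) \<Rightarrow> 'i set \<Rightarrow> ('i \<Rightarrow> 'a) \<Rightarrow> ('i \<Rightarrow> real) \<Rightarrow> bool" where
  "approximation_system N I x r \<longleftrightarrow>
     (\<forall>i\<in>I. r i > 0) \<and> bdd_above (r ` I) \<and>
     (\<forall>m::nat. finite {i\<in>I. N (x i) < real m \<and> r i > 1 / real m})"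

definition homogeneous_ubiquitous_system ::
  "('a::euclidean_space \<Rightarrow> real) \<Rightarrow> 'i set \<Rightarrow> ('i \<Rightarrow> 'a) \<Rightarrow> ('i \<Rightarrow> real) \<Rightarrow> 'a set \<Rightarrow> bool" where
  "homogeneous_ubiquitous_system N I x r U \<longleftrightarrow>
     approximation_system N I x r \<and>
     (AE y in lebesgue. y \<in> U \<longrightarrow> infinite {i\<in>I. N (y - x i) < r i})"

end

theory Submission imports Defs begin

lemma norm_basics:
  assumes "is_norm N"
  shows "N 0 = 0" "N (-v) = N v" "N (u + v) \<le> N u + N v" "N v \<ge> 0" "N (u - v) = N (v - u)"
proof -
  show "N 0 = 0" using assms unfolding is_norm_def by auto
  show n: "N (-v) = N v" for v using assms unfolding is_norm_def
    by (metis abs_minus_cancel abs_one mult_1 scaleR_minus1_left)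
  show "N (u + v) \<le> N u + N v" "N v \<ge> 0" using assms unfolding is_norm_def by auto
  show "N (u - v) = N (v - u)" using n[of "v - u"] by simp
qed

lemma norm_sum_le:
  assumes "is_norm N" "finite A"
  shows "N (sum f A) \<le> (\<Sum>i\<in>A. N (f i))"
  using assms(2)
proof (induction A rule: finite_induct)
  case empty then show ?case using norm_basics(1)[OF assms(1)] by simp
next
  case (insert a A)
  then show ?case using norm_basics(3)[OF assms(1), of "f a" "sum f A"] by simp
qed

lemma norm_upper:
  assumes "is_norm N"
  shows "\<exists>b>0. \<forall>v. N v \<le> b * norm v"
proof -
  define b where "b = (\<Sum>i\<in>Basis. N i) + 1"
  have b0: "b > 0" unfolding b_def using norm_basics(4)[OF assms]
    by (smt (verit) sum_nonneg)
  have "N v \<le> b * norm v" for v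
  proof -
    have "N v = N (\<Sum>i\<in>Basis. (v \<bullet> i) *\<^sub>R i)" by (simp add: euclidean_representation)
    also have "\<dots> \<le> (\<Sum>i\<in>Basis. N ((v \<bullet> i) *\<^sub>R i))" by (rule norm_sum_le[OF assms]) simp
    also have "\<dots> = (\<Sum>i\<in>Basis. \<bar>v \<bullet> i\<bar> * N i)" using assms unfolding is_norm_def by simp
    also have "\<dots> \<le> (\<Sum>i\<in>Basis. norm v * N i)"
      by (intro sum_mono mult_right_mono Basis_le_norm norm_basics(4)[OF assms])
    also have "\<dots> = norm v * (\<Sum>i\<in>Basis. N i)" by (simp add: sum_distrib_left)
    also have "\<dots> \<le> b * norm v" unfolding b_def by (simp add: algebra_simps)
    finally show ?thesis .
  qed
  with b0 show ?thesis by blast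
qed

lemma norm_cont:
  assumes "is_norm N"
  shows "continuous_on UNIV N"
proof -
  obtain b where b: "b > 0" "\<And>v. N v \<le> b * norm v" using norm_upper[OF assms] by blast
  have L: "\<bar>N u - N v\<bar> \<le> b * dist u v" for u v
  proof -
    have "N u \<le> N v + N (u - v)" using norm_basics(3)[OF assms, of v "u - v"] by simp
    moreover have "N v \<le> N u + N (v - u)" using norm_basics(3)[OF assms, of u "v - u"] by simp
    moreover have "N (u - v) \<le> b * dist u v" "N (v - u) \<le> b * dist u v"
      using b(2)[of "u - v"] b(2)[of "v - u"] by (auto simp: dist_norm norm_minus_commute)
    ultimately show ?thesis by linarith
  qed
  show ?thesis unfolding continuous_on_iff
  proof (intro ballI allI impI)
    fix x and e :: real assume "e > 0"
    show "\<exists>d>0. \<forall>x'\<in>UNIV. dist x' x < d \<longrightarrow> dist (N x') (N x) < e"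
    proof (intro exI[of _ "e / b"] conjI ballI impI)
      show "e / b > 0" using \<open>e>0\<close> b by simp
      fix x' assume "dist x' x < e / b"
      then have "b * dist x' x < e" using b by (simp add: field_simps)
      then show "dist (N x') (N x) < e" using L[of x' x] by (simp add: dist_real_def)
    qed
  qed
qed

lemma norm_lower:
  assumes "is_norm N"
  shows "\<exists>a>0. \<forall>v::'a::euclidean_space. a * norm v \<le> N v"
proof -
  have "\<exists>x\<in>sphere (0::'a) 1. \<forall>y\<in>sphere 0 1. N x \<le> N y"
    by (rule continuous_attains_inf) (auto intro: continuous_on_subset[OF norm_cont[OF assms]])
  then obtain x0 :: 'a where x0: "norm x0 = 1" "\<And>y. norm y = 1 \<Longrightarrow> N x0 \<le> N y" by auto
  have a0: "N x0 > 0" using assms x0(1) unfolding is_norm_def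
    by (metis less_eq_real_def norm_zero zero_neq_one)
  have "N x0 * norm v \<le> N v" for v
  proof (cases "v = 0")
    case True then show ?thesis by (simp add: norm_basics(4)[OF assms])
  next
    case False
    have "N x0 \<le> N ((1 / norm v) *\<^sub>R v)" using False by (intro x0(2)) simp
    also have "\<dots> = N v / norm v" using assms unfolding is_norm_def by simp
    finally show ?thesis using False by (simp add: field_simps)
  qed
  with a0 show ?thesis by blast
qed

lemma core_density:
  fixes S Z :: "'a::euclidean_space set"
  assumes S: "S \<in> lmeasurable" and Z: "negligible Z" and d0: "0 < \<delta>" and d1: "\<delta> \<le> 1"
    and H: "\<And>x d. x \<in> S - Z \<Longrightarrow> 0 < d \<Longrightarrow> \<exists>D. 0 < D \<and> D < d \<and>
        measure lebesgue (S \<inter> ball x D) \<le> (1 - \<delta>) * measure lebesgue (ball x D)"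
  shows "negligible S"
proof (rule ccontr)
  assume nn: "\<not> negligible S"
  define s where "s = measure lebesgue S"
  have s0: "s > 0" using nn S negligible_iff_measure0 s_def
    by (metis measure_nonneg order_le_less)
  define \<eta> where "\<eta> = \<delta> * s / 2"
  have eta0: "\<eta> > 0" using d0 s0 by (simp add: \<eta>_def)
  have Sl: "S \<in> sets lebesgue" using S by (simp add: fmeasurableD)
  obtain G where G: "open G" "S \<subseteq> G" "(G - S) \<in> lmeasurable" "emeasure lebesgue (G - S) < ennreal \<eta>"
    using sets_lebesgue_outer_open[OF Sl eta0] by blast
  define K where "K = {(x, D). x \<in> S - Z \<and> 0 < D \<and> ball x D \<subseteq> G \<and>
        measure lebesgue (S \<inter> ball x D) \<le> (1 - \<delta>) * measure lebesgue (ball x D)}"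
  have cov: "\<exists>i. i \<in> K \<and> x \<in> ball (fst i) (snd i) \<and> snd i < d" if xS: "x \<in> S - Z" and d0': "0 < d" for x d
  proof -
    obtain e where e: "e > 0" "ball x e \<subseteq> G" using G(1,2) xS open_contains_ball by blast
    obtain D where D: "0 < D" "D < min d e"
        "measure lebesgue (S \<inter> ball x D) \<le> (1 - \<delta>) * measure lebesgue (ball x D)"
      using H[OF xS, of "min d e"] d0' e(1) by auto
    have "ball x D \<subseteq> ball x e" using D(2) by (intro subset_ball) simp
    then have "ball x D \<subseteq> G" using e(2) by (rule order_trans)
    then have "(x, D) \<in> K" using D xS unfolding K_def by auto
    then show ?thesis using D by (intro exI[of _ "(x,D)"]) auto
  qed
  obtain C where C: "countable C" "C \<subseteq> K"
     "pairwise (\<lambda>i j. disjnt (ball (fst i) (snd i)) (ball (fst j) (snd j))) C"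
     "negligible((S - Z) - (\<Union>i \<in> C. ball (fst i) (snd i)))"
    using Vitali_covering_theorem_balls[of "S - Z" K fst snd] cov by blast
  define B where "B = (\<lambda>i::'a \<times> real. ball (fst i) (snd i))"
  have negl: "negligible (S - (\<Union>i\<in>C. B i))"
    by (rule negligible_subset[OF negligible_Un[OF C(4) Z]]) (auto simp: B_def)
  have disj: "disjoint_family_on B C" and disj2: "disjoint_family_on (\<lambda>i. S \<inter> B i) C"
    using C(3) unfolding disjoint_family_on_def pairwise_def disjnt_def B_def by blast+
  have Bs: "B i \<in> sets lebesgue" for i unfolding B_def by (simp add: fmeasurableD)
  have SBs: "S \<inter> B i \<in> sets lebesgue" for i using Bs Sl by blast
  have UC: "(\<Union>i\<in>C. S \<inter> B i) \<in> sets lebesgue"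
    by (rule sets.countable_UN''[OF C(1)]) (rule SBs)
  have UB: "(\<Union>i\<in>C. B i) \<in> sets lebesgue"
    by (rule sets.countable_UN''[OF C(1)]) (rule Bs)
  have RD: "S - (\<Union>i\<in>C. B i) \<in> sets lebesgue" by (rule sets.Diff[OF Sl UB])
  have "emeasure lebesgue S \<le> emeasure lebesgue ((\<Union>i\<in>C. S \<inter> B i) \<union> (S - (\<Union>i\<in>C. B i)))"
    by (rule emeasure_mono) (blast, rule sets.Un[OF UC RD])
  also have "\<dots> \<le> emeasure lebesgue (\<Union>i\<in>C. S \<inter> B i) + emeasure lebesgue (S - (\<Union>i\<in>C. B i))"
    by (rule emeasure_subadditive[OF UC RD])
  also have "emeasure lebesgue (S - (\<Union>i\<in>C. B i)) = 0"
    using negl by (simp add: negligible_iff_null_sets null_setsD1)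
  also have "emeasure lebesgue (\<Union>i\<in>C. S \<inter> B i) = (\<integral>\<^sup>+i. emeasure lebesgue (S \<inter> B i) \<partial>count_space C)"
    by (rule emeasure_UN_countable[OF SBs C(1) disj2])
  also have "\<dots> \<le> (\<integral>\<^sup>+i. ennreal (1 - \<delta>) * emeasure lebesgue (B i) \<partial>count_space C)"
  proof (rule nn_integral_mono)
    fix i assume "i \<in> space (count_space C)"
    then have "i \<in> K" using C(2) by auto
    then have m: "measure lebesgue (S \<inter> B i) \<le> (1 - \<delta>) * measure lebesgue (B i)"
      unfolding K_def B_def by auto
    have "emeasure lebesgue (S \<inter> B i) = ennreal (measure lebesgue (S \<inter> B i))"
      using emeasure_eq_measure2[OF fmeasurable_Int_fmeasurable[OF S Bs]] .
    also have "\<dots> \<le> ennreal ((1 - \<delta>) * measure lebesgue (B i))" using m by (rule ennreal_leI)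
    also have "\<dots> = ennreal (1 - \<delta>) * emeasure lebesgue (B i)"
      using d1 ennreal_mult[of "1 - \<delta>" "measure lebesgue (B i)"] emeasure_eq_measure2[of "B i" lebesgue] by (simp add: B_def)
    finally show "emeasure lebesgue (S \<inter> B i) \<le> ennreal (1 - \<delta>) * emeasure lebesgue (B i)" .
  qed
  also have "\<dots> = ennreal (1 - \<delta>) * (\<integral>\<^sup>+i. emeasure lebesgue (B i) \<partial>count_space C)"
    by (rule nn_integral_cmult) simp
  also have "(\<integral>\<^sup>+i. emeasure lebesgue (B i) \<partial>count_space C) = emeasure lebesgue (\<Union>i\<in>C. B i)"
    by (rule emeasure_UN_countable[OF Bs C(1) disj, symmetric])
  also have "\<dots> \<le> emeasure lebesgue G"
  proof (rule emeasure_mono)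
    show "(\<Union>i\<in>C. B i) \<subseteq> G"
    proof (rule UN_least)
      fix i assume "i \<in> C" then have "i \<in> K" using C(2) by auto
      then show "B i \<subseteq> G" unfolding K_def B_def by (cases i) auto
    qed
    show "G \<in> sets lebesgue" using G(1) by simp
  qed
  also have "G = S \<union> (G - S)" using G(2) by auto
  also have "emeasure lebesgue (S \<union> (G - S)) = emeasure lebesgue S + emeasure lebesgue (G - S)"
    by (rule plus_emeasure[symmetric]) (auto simp: Sl fmeasurableD[OF G(3)])
  also have "\<dots> \<le> ennreal s + ennreal \<eta>"
    using G(4) S by (intro add_mono) (auto simp: s_def emeasure_eq_measure2)
  finally have "ennreal s \<le> ennreal (1 - \<delta>) * (ennreal s + ennreal \<eta>)"
    using S by (simp add: s_def emeasure_eq_measure2 mult_left_mono)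
  then have "ennreal s \<le> ennreal ((1 - \<delta>) * (s + \<eta>))"
    using ennreal_mult[of "1 - \<delta>" "s + \<eta>"] d1 s0 eta0 by simp
  then have "s \<le> (1 - \<delta>) * (s + \<eta>)"
    using d1 s0 eta0 by (subst (asm) ennreal_le_iff) simp_all
  moreover have "(1 - \<delta>) * (s + \<eta>) < s"
  proof -
    have "(1 - \<delta>) * \<eta> \<le> \<eta>" using d0 eta0 by (simp add: mult_le_cancel_right1)
    then have "(1 - \<delta>) * (s + \<eta>) \<le> s - \<delta> * s + \<eta>" by (simp add: algebra_simps)
    then show ?thesis using mult_pos_pos[OF d0 s0] unfolding \<eta>_def by linarith
  qed
  ultimately show False by linarith
qed

lemma open_Nball:
  assumes "is_norm N"
  shows "open {y. N (y - p) < t}"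
proof (rule open_Collect_less)
  show "continuous_on UNIV (\<lambda>y. N (y - p))"
    by (rule continuous_on_compose2[OF norm_cont[OF assms]]) (auto intro!: continuous_intros)
qed simp

lemma measure_ball_unit:
  fixes p :: "'a::euclidean_space"
  assumes "t \<ge> 0"
  shows "measure lebesgue (ball p t) = t ^ DIM('a) * measure lebesgue (ball (0::'a) 1)"
  using content_ball_conv_unit_ball[OF assms, of p] by simp

theorem proposition4p5:
  fixes N :: "'a::euclidean_space \<Rightarrow> real"
    and I :: "'i set" and x :: "'i \<Rightarrow> 'a" and r :: "'i \<Rightarrow> real"
    and U :: "'a set" and c :: real
  assumes "is_norm N"
    and "countable I" and "infinite I"
    and "open U" and "U \<noteq> {}"
    and "homogeneous_ubiquitous_system N I x r U"
    and "c > 0"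
  shows "homogeneous_ubiquitous_system N I x (\<lambda>i. c * r i) U"
proof -
  note nN = assms(1)
  obtain a where a: "a > 0" "\<And>v. a * norm v \<le> N v" using norm_lower[OF nN] by blast
  obtain b where b: "b > 0" "\<And>v. N v \<le> b * norm v" using norm_upper[OF nN] by blast
  have pos: "\<And>i. i \<in> I \<Longrightarrow> r i > 0" and bdd: "bdd_above (r ` I)"
    and fin: "\<And>m::nat. finite {i\<in>I. N (x i) < real m \<and> r i > 1 / real m}"
    and AEh: "AE y in lebesgue. y \<in> U \<longrightarrow> infinite {i\<in>I. N (y - x i) < r i}"
    using assms(6) unfolding homogeneous_ubiquitous_system_def approximation_system_def by auto
  obtain R where R: "\<And>i. i \<in> I \<Longrightarrow> r i \<le> R" using bdd unfolding bdd_above_def by auto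
  have part1: "approximation_system N I x (\<lambda>i. c * r i)"
    unfolding approximation_system_def
  proof (intro conjI ballI allI)
    show "c * r i > 0" if "i \<in> I" for i using pos[OF that] assms(7) by simp
    show "bdd_above ((\<lambda>i. c * r i) ` I)"
      by (rule bdd_aboveI[of _ "c * R"]) (use R assms(7) in \<open>auto intro: mult_left_mono\<close>)
    fix m :: nat
    define M where "M = m * (nat \<lceil>c\<rceil> + 1)"
    have "{i\<in>I. N (x i) < real m \<and> c * r i > 1 / real m} \<subseteq> {i\<in>I. N (x i) < real M \<and> r i > 1 / real M}"
    proof safe
      fix i assume i: "i \<in> I" "N (x i) < real m" "1 / real m < c * r i"
      have m0: "m > 0" using i(2) norm_basics(4)[OF nN, of "x i"] by (cases m) auto
      have cM: "c * real m \<le> real M"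
      proof -
        have "c \<le> real (nat \<lceil>c\<rceil> + 1)" by linarith
        then have "c * real m \<le> real (nat \<lceil>c\<rceil> + 1) * real m" by (rule mult_right_mono) simp
        then show ?thesis unfolding M_def by (simp add: algebra_simps)
      qed
      have mM: "real m \<le> real M" unfolding M_def by simp
      show "N (x i) < real M" using i(2) mM by linarith
      have cm0: "0 < c * real m" using m0 assms(7) by simp
      have "1 / real M \<le> 1 / (c * real m)" using cM cm0 by (intro divide_left_mono) (auto intro!: mult_pos_pos)
      also have "\<dots> < r i" using i(3) m0 assms(7) by (simp add: field_simps)
      finally show "1 / real M < r i" .
    qed
    then show "finite {i\<in>I. N (x i) < real m \<and> c * r i > 1 / real m}"
      by (rule finite_subset) (rule fin)
  qed
  obtain Z0 where Z0: "{y \<in> space lebesgue. \<not> (y \<in> U \<longrightarrow> infinite {i\<in>I. N (y - x i) < r i})} \<subseteq> Z0"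
      "emeasure lebesgue Z0 = 0" "Z0 \<in> sets lebesgue"
    using AEh by (rule AE_E)
  define Z where "Z = {y \<in> U. finite {i\<in>I. N (y - x i) < r i}}"
  have negZ: "negligible Z"
  proof -
    have "Z0 \<in> null_sets lebesgue" using Z0(2,3) by auto
    then have "negligible Z0" by (simp add: negligible_iff_null_sets)
    moreover have "Z \<subseteq> Z0" using Z0(1) unfolding Z_def by auto
    ultimately show ?thesis by (rule negligible_subset)
  qed
  define Sm where "Sm = (\<lambda>i. {y. N (y - x i) < c * r i})"
  define Ab where "Ab F = U - (\<Union>i\<in>I - F. Sm i)" for F
  define S where "S F k = Ab F \<inter> ball 0 (real k)" for F k
  define q where "q = (c / b) / (c / b + 1 / a)"
  have cb0: "c / b > 0" using b(1) assms(7) by simp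
  have kpos: "c / b + 1 / a > 0" using a(1) cb0 by (simp add: add_pos_pos)
  have q0: "0 < q" "q < 1"
  proof -
    show "0 < q" unfolding q_def by (rule divide_pos_pos[OF cb0 kpos])
    have "c / b < c / b + 1 / a" using a(1) by simp
    then show "q < 1" unfolding q_def using divide_less_eq_1_pos[OF kpos] by blast
  qed
  define \<delta> where "\<delta> = q ^ DIM('a)"
  have d0: "0 < \<delta>" and d1: "\<delta> \<le> 1" unfolding \<delta>_def using q0 by (auto simp: power_le_one)
  have Slm: "S F k \<in> lmeasurable" for F k
  proof -
    have "Ab F \<in> sets lebesgue"
    proof -
      have "open (\<Union>i\<in>I - F. Sm i)" unfolding Sm_def by (intro open_UN ballI open_Nball[OF nN])
      then have "(\<Union>i\<in>I - F. Sm i) \<in> sets lebesgue" by simp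
      moreover have "U \<in> sets lebesgue" using assms(4) by simp
      ultimately show ?thesis unfolding Ab_def by (rule sets.Diff[rotated])
    qed
    then show "S F k \<in> lmeasurable" unfolding S_def
      using fmeasurable_Int_fmeasurable[OF lmeasurable_ball \<open>Ab F \<in> sets lebesgue\<close>] by (simp add: Int_commute)
  qed
  have negS: "negligible (S F k)" if finF: "finite F" for F k
  proof (rule core_density[OF Slm negZ d0 d1])
    fix y and d :: real assume yS: "y \<in> S F k - Z" and d: "0 < d"
    have yU: "y \<in> U" and yinf: "infinite {i\<in>I. N (y - x i) < r i}"
      and ynot: "\<And>i. i \<in> I - F \<Longrightarrow> \<not> N (y - x i) < c * r i"
      using yS unfolding S_def Ab_def Z_def Sm_def by auto
    define \<rho> where "\<rho> = d / (c / b + 1 / a)"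
    have rho0: "\<rho> > 0" unfolding \<rho>_def using d kpos by simp
    obtain m :: nat where m: "max (N y + R) (1 / \<rho>) < real m" using reals_Archimedean2 by blast
    have m0: "real m > 0" using m rho0 by (smt (verit) divide_pos_pos)
    have "infinite ({i\<in>I. N (y - x i) < r i} - (F \<union> {i\<in>I. N (x i) < real m \<and> r i > 1 / real m}))"
      by (rule Diff_infinite_finite) (use finF fin yinf in auto)
    then obtain i where i: "i \<in> I" "N (y - x i) < r i" "i \<notin> F"
        "\<not> (N (x i) < real m \<and> r i > 1 / real m)"
    proof -
      assume inf: "infinite ({i\<in>I. N (y - x i) < r i} - (F \<union> {i\<in>I. N (x i) < real m \<and> r i > 1 / real m}))"
      then obtain i where "i \<in> {i\<in>I. N (y - x i) < r i} - (F \<union> {i\<in>I. N (x i) < real m \<and> r i > 1 / real m})"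
        using infinite_imp_nonempty by blast
      then show thesis using that by blast
    qed
    show "\<exists>D. 0 < D \<and> D < d \<and> measure lebesgue (S F k \<inter> ball y D) \<le> (1 - \<delta>) * measure lebesgue (ball y D)"
    proof -
      have ri0: "r i > 0" using pos i(1) by blast
      have "N (x i) \<le> N (x i - y) + N y" using norm_basics(3)[OF nN, of "x i - y" y] by simp
      also have "N (x i - y) = N (y - x i)" by (rule norm_basics(5)[OF nN])
      finally have "N (x i) < real m" using i(2) R[OF i(1)] m by linarith
      then have ri: "r i \<le> 1 / real m" using i(4) by linarith
      have "1 / \<rho> < real m" using m by linarith
      then have "1 / real m < \<rho>" using rho0 m0 by (simp add: field_simps)
      with ri have riR: "r i < \<rho>" by linarith
      define D where "D = (c / b + 1 / a) * r i"
      have D0: "D > 0" unfolding D_def using kpos ri0 by simp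
      have Dd: "D < d"
      proof -
        have "D < (c / b + 1 / a) * \<rho>" unfolding D_def using kpos riR by simp
        also have "\<dots> = d" unfolding \<rho>_def using kpos by simp
        finally show ?thesis .
      qed
      define sr where "sr = c * r i / b"
      have sr0: "sr > 0" unfolding sr_def using assms(7) ri0 b(1) by simp
      have "q * D = (c / b) * r i" unfolding q_def D_def using kpos by simp
      then have srq: "sr = q * D" unfolding sr_def by simp
      define E where "E = ball (x i) sr"
      have ED: "E \<subseteq> ball y D"
      proof
        fix z assume "z \<in> E"
        then have z: "dist (x i) z < sr" unfolding E_def by simp
        have "a * norm (y - x i) \<le> N (y - x i)" by (rule a(2))
        then have "a * dist y (x i) < r i" using i(2) by (simp add: dist_norm)
        then have "dist y (x i) < r i / a" using a(1) by (simp add: field_simps)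
        then have "dist y z < r i / a + sr" using dist_triangle[of y z "x i"] z by linarith
        also have "r i / a + sr = D" unfolding D_def sr_def by (simp add: field_simps)
        finally show "z \<in> ball y D" by simp
      qed
      have ES: "S F k \<inter> E = {}"
      proof -
        have "z \<notin> S F k" if "z \<in> E" for z
        proof -
          have "norm (z - x i) < sr" using that unfolding E_def by (simp add: dist_norm norm_minus_commute)
          then have "b * norm (z - x i) < b * sr" using b(1) by simp
          also have "b * sr = c * r i" unfolding sr_def using b(1) by simp
          finally have "N (z - x i) < c * r i" using b(2)[of "z - x i"] by linarith
          then have "z \<in> Sm i" unfolding Sm_def by simp
          then show ?thesis using i(1,3) unfolding S_def Ab_def by auto
        qed
        then show ?thesis by blast
      qed
      have "measure lebesgue (S F k \<inter> ball y D) \<le> measure lebesgue (ball y D - E)"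
      proof (rule measure_mono_fmeasurable)
        show "S F k \<inter> ball y D \<subseteq> ball y D - E" using ES by blast
        show "S F k \<inter> ball y D \<in> sets lebesgue" using Slm[of F k] by (simp add: fmeasurableD sets.Int)
        show "ball y D - E \<in> lmeasurable" unfolding E_def by (simp add: fmeasurable.Diff)
      qed
      also have "measure lebesgue (ball y D - E) = measure lebesgue (ball y D) - measure lebesgue E"
        by (rule measure_Diff) (use ED emeasure_lborel_ball_finite[of y D] in \<open>auto simp: E_def\<close>)
      also have "measure lebesgue E = \<delta> * measure lebesgue (ball y D)"
        unfolding E_def \<delta>_def using measure_ball_unit[of sr "x i"] measure_ball_unit[of D y] sr0 D0 srq
        by (simp add: power_mult_distrib)
      finally show ?thesis using D0 Dd by (intro exI[of _ D]) (simp add: algebra_simps)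
    qed
  qed
  define FS where "FS = {F. finite F \<and> F \<subseteq> I}"
  define Fam where "Fam = (\<lambda>(F,k). S F k) ` (FS \<times> (UNIV::nat set))"
  have negU: "negligible (\<Union>Fam)"
  proof (rule negligible_countable_Union)
    show "countable Fam" unfolding Fam_def FS_def
      by (intro countable_image countable_SIGMA countable_Collect_finite_subset assms(2)) auto
    show "negligible T" if "T \<in> Fam" for T
      using that negS unfolding Fam_def FS_def by auto
  qed
  have AE2: "AE y in lebesgue. y \<in> U \<longrightarrow> infinite {i\<in>I. N (y - x i) < c * r i}"
  proof (rule AE_I')
    show "\<Union>Fam \<in> null_sets lebesgue" using negU by (simp add: negligible_iff_null_sets)
    show "{y \<in> space lebesgue. \<not> (y \<in> U \<longrightarrow> infinite {i\<in>I. N (y - x i) < c * r i})} \<subseteq> \<Union>Fam"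
    proof
      fix y assume "y \<in> {y \<in> space lebesgue. \<not> (y \<in> U \<longrightarrow> infinite {i\<in>I. N (y - x i) < c * r i})}"
      then have yU: "y \<in> U" and yfin: "finite {i\<in>I. N (y - x i) < c * r i}" by auto
      define F where "F = {i\<in>I. N (y - x i) < c * r i}"
      define k where "k = nat \<lceil>norm y\<rceil> + 1"
      have "norm y < real k" unfolding k_def by linarith
      then have yb: "y \<in> ball 0 (real k)" by simp
      have "y \<in> Ab F" unfolding Ab_def Sm_def F_def using yU by auto
      then have "y \<in> S F k" unfolding S_def using yb by simp
      moreover have "(F, k) \<in> FS \<times> UNIV" unfolding FS_def F_def using yfin by auto
      ultimately show "y \<in> \<Union>Fam" unfolding Fam_def by force
    qed
  qed
  show ?thesis unfolding homogeneous_ubiquitous_system_def using part1 AE2 by blast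
qed

end
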